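(* Let $\mathfrak{G}$ be a finite alphabet, and $\mathfrak{s}$ and $\mathfrak{t}$ be two $\mathfrak{G}$-trees such that $\mathfrak{s}\preceq\mathfrak{t}$. As subposets of the $\mathfrak{G}$-prefix poset (resp. of the $(\mathfrak{G}\sqcup\{\lozenge_{|\mathfrak{s}|}\})$-prefix poset for the last one), one has the poset isomorphisms $[\mathfrak{s},\mathfrak{t}] \simeq [\text{leaf},\mathfrak{r}_1]\times\cdots\times[\text{leaf},\mathfrak{r}_{|\mathfrak{s}|}] \simeq [\lozenge_{|\mathfrak{s}|},\ \lozenge_{|\mathfrak{s}|}[\mathfrak{r}_1,\dots,\mathfrak{r}_{|\mathfrak{s}|}]]$, where $(\mathfrak{r}_1,\dots,\mathfrak{r}_{|\mathfrak{s}|})$ is the forest $\mathfrak{t}\setminus\mathfrak{s}$ and "leaf" denotes the tree with no internal node.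
   Context: $\mathfrak{G}$ is a finite alphabet (letters with arities $\geq 1$). A $\mathfrak{G}$-tree is either the leaf (the tree with no internal node) or a root decorated by a letter $\mathtt{a}\in\mathfrak{G}$ with $|\mathtt{a}|$ children that are $\mathfrak{G}$-trees; $|\mathfrak{s}|$ denotes the number of leaves, ordered left to right, and $\mathfrak{s}\circ[\mathfrak{r}_1,\dots,\mathfrak{r}_{|\mathfrak{s}|}]$ grafts each $\mathfrak{r}_i$ onto the $i$-th leaf of $\mathfrak{s}$. The $\mathfrak{G}$-prefix poset is the set of $\mathfrak{G}$-trees ordered by $\mathfrak{s}\preceq\mathfrak{t}$ iff $\mathfrak{t}=\mathfrak{s}\circ[\mathfrak{r}_1,\dots,\mathfrak{r}_{|\mathfrak{s}|}]$ for some $\mathfrak{G}$-trees $\mathfrak{r}_i$; these $\mathfrak{r}_i$ are then unique and form the difference $\mathfrak{t}\setminus\mathfrak{s}$. For a new letter $\lozenge_k$ of arity $k$, $\lozenge_k[\mathfrak{r}_1,\dots,\mathfrak{r}_k]$ is the tree with root decorated by $\lozenge_k$ and children $\mathfrak{r}_1,\dots,\mathfrak{r}_k$, and $\lozenge_k$ alone denotes the corolla (root $\lozenge_k$ with $k$ leaves as children). *)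

theory Defs
  imports Main
begin

text \<open>Planar rooted trees whose internal nodes are decorated by letters; the leaf has no
  internal node. An alphabet is a set of letters G with an arity function ar.\<close>

datatype 'a gtree = Leaf | Node 'a "'a gtree list"

fun is_gtree :: "'a set \<Rightarrow> ('a \<Rightarrow> nat) \<Rightarrow> 'a gtree \<Rightarrow> bool" where
  "is_gtree G ar Leaf = True"
| "is_gtree G ar (Node a cs) =
     (a \<in> G \<and> length cs = ar a \<and> (\<forall>c\<in>set cs. is_gtree G ar c))"

fun nleaves :: "'a gtree \<Rightarrow> nat" where
  "nleaves Leaf = 1"
| "nleaves (Node a cs) = sum_list (map nleaves cs)"

fun graft :: "'a gtree \<Rightarrow> 'a gtree list \<Rightarrow> 'a gtree"
and grafts :: "'a gtree list \<Rightarrow> 'a gtree list \<Rightarrow> 'a gtree list" where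
  "graft Leaf rs = (case rs of [] \<Rightarrow> Leaf | r # _ \<Rightarrow> r)"
| "graft (Node a cs) rs = Node a (grafts cs rs)"
| "grafts [] rs = []"
| "grafts (c # cs) rs = graft c (take (nleaves c) rs) # grafts cs (drop (nleaves c) rs)"

definition prefix_le :: "'a set \<Rightarrow> ('a \<Rightarrow> nat) \<Rightarrow> 'a gtree \<Rightarrow> 'a gtree \<Rightarrow> bool" where
  "prefix_le G ar s t \<longleftrightarrow>
     (\<exists>rs. length rs = nleaves s \<and> (\<forall>r\<in>set rs. is_gtree G ar r) \<and> t = graft s rs)"

definition prefix_interval :: "'a set \<Rightarrow> ('a \<Rightarrow> nat) \<Rightarrow> 'a gtree \<Rightarrow> 'a gtree \<Rightarrow> 'a gtree set" where
  "prefix_interval G ar s t =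
     {u. is_gtree G ar u \<and> prefix_le G ar s u \<and> prefix_le G ar u t}"

text \<open>Alphabet G extended by a fresh letter (None = \<lozenge>_k) of arity k.\<close>
definition ext_alph :: "'a set \<Rightarrow> 'a option set" where
  "ext_alph G = insert None (Some ` G)"

definition ext_ar :: "('a \<Rightarrow> nat) \<Rightarrow> nat \<Rightarrow> 'a option \<Rightarrow> nat" where
  "ext_ar ar k x = (case x of None \<Rightarrow> k | Some a \<Rightarrow> ar a)"

definition diamond :: "'a gtree list \<Rightarrow> 'a option gtree" where
  "diamond rs = Node None (map (map_gtree Some) rs)"

definition corolla :: "nat \<Rightarrow> 'a option gtree" where
  "corolla k = Node None (replicate k Leaf)"

definition poset_iso :: "'x set \<Rightarrow> ('x \<Rightarrow> 'x \<Rightarrow> bool) \<Rightarrow> 'y set \<Rightarrow> ('y \<Rightarrow> 'y \<Rightarrow> bool) \<Rightarrow> bool" where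
  "poset_iso A leA B leB \<longleftrightarrow>
     (\<exists>f. bij_betw f A B \<and> (\<forall>x\<in>A. \<forall>y\<in>A. leA x y \<longleftrightarrow> leB (f x) (f y)))"

definition list_product :: "'x set list \<Rightarrow> 'x list set" where
  "list_product Ps = {us. length us = length Ps \<and> (\<forall>i<length Ps. us ! i \<in> Ps ! i)}"

end

theory Submission imports Defs begin

lemma length_grafts[simp]: "length (grafts cs zs) = length cs"
  by (induction cs arbitrary: zs) auto

lemma nleaves_map[simp]: "nleaves (map_gtree f a) = nleaves a"
  by (induction a) (simp_all add: o_def cong: map_cong)

lemma graft_map:
  "map_gtree f (graft a zs) = graft (map_gtree f a) (map (map_gtree f) zs)"
  "map (map_gtree f) (grafts cs zs) = grafts (map (map_gtree f) cs) (map (map_gtree f) zs)"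
  by (induction a zs and cs zs rule: graft_grafts.induct) (auto split: list.split simp: take_map drop_map)

lemma nleaves_graft:
  "length zs = nleaves a \<Longrightarrow> nleaves (graft a zs) = sum_list (map nleaves zs)"
  "length zs = sum_list (map nleaves cs) \<Longrightarrow> sum_list (map nleaves (grafts cs zs)) = sum_list (map nleaves zs)"
proof (induction a zs and cs zs rule: graft_grafts.induct)
  case (1 rs) then show ?case by (cases rs) auto
next
  case (4 c cs rs)
  have l: "length (take (nleaves c) rs) = nleaves c" using 4(3) by simp
  have l2: "length (drop (nleaves c) rs) = sum_list (map nleaves cs)" using 4(3) by simp
  have "sum_list (map nleaves rs) = sum_list (map nleaves (take (nleaves c) rs)) + sum_list (map nleaves (drop (nleaves c) rs))"
    by (metis append_take_drop_id map_append sum_list_append)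
  then show ?case using 4(1)[OF l] 4(2)[OF l2] by simp
qed auto

lemma graft_gtree:
  "length zs = nleaves a \<Longrightarrow> is_gtree A ar (graft a zs) \<longleftrightarrow> is_gtree A ar a \<and> (\<forall>z\<in>set zs. is_gtree A ar z)"
  "length zs = sum_list (map nleaves cs) \<Longrightarrow> (\<forall>x\<in>set (grafts cs zs). is_gtree A ar x) \<longleftrightarrow> (\<forall>c\<in>set cs. is_gtree A ar c) \<and> (\<forall>z\<in>set zs. is_gtree A ar z)"
proof (induction a zs and cs zs rule: graft_grafts.induct)
  case (1 rs) then show ?case by (cases rs) auto
next
  case (4 c cs rs)
  have "rs = take (nleaves c) rs @ drop (nleaves c) rs" by simp
  then have "set rs = set (take (nleaves c) rs) \<union> set (drop (nleaves c) rs)"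
    by (metis set_append)
  with 4 show ?case by auto
qed auto

lemma graft_take:
  "nleaves a \<le> n \<Longrightarrow> graft a (take n zs) = graft a zs"
  "sum_list (map nleaves cs) \<le> n \<Longrightarrow> grafts cs (take n zs) = grafts cs zs"
proof (induction a zs and cs zs arbitrary: n and n rule: graft_grafts.induct)
  case (1 rs) then show ?case by (cases rs; cases n) auto
next
  case (4 c cs rs)
  have a: "take (nleaves c) (take n rs) = take (nleaves c) rs" using 4(3) by (simp add: min_def)
  have b: "drop (nleaves c) (take n rs) = take (n - nleaves c) (drop (nleaves c) rs)"
    by (simp add: drop_take)
  show ?case using 4 by (simp add: a b)
qed auto

lemma grafts_append:
  "grafts (xs @ ys) zs = grafts xs zs @ grafts ys (drop (sum_list (map nleaves xs)) zs)"
  by (induction xs arbitrary: zs) (auto simp: add.commute)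

lemma graft_assoc:
  "length xs = nleaves a \<Longrightarrow> graft (graft a xs) zs = graft a (grafts xs zs)"
  "length xs = sum_list (map nleaves cs) \<Longrightarrow> grafts (grafts cs xs) zs = grafts cs (grafts xs zs)"
proof (induction a xs and cs xs arbitrary: zs and zs rule: graft_grafts.induct)
  case (1 rs) then show ?case by (cases rs) (auto simp: length_Suc_conv graft_take(1))
next
  case (4 c cs rs)
  let ?n = "nleaves c"
  let ?m = "sum_list (map nleaves (take ?n rs))"
  have ln: "length (take ?n rs) = ?n" using 4(3) by simp
  have m: "nleaves (graft c (take ?n rs)) = ?m" using nleaves_graft(1)[OF ln] .
  have split: "grafts rs zs = grafts (take ?n rs) zs @ grafts (drop ?n rs) (drop ?m zs)"
    using grafts_append[of "take ?n rs" "drop ?n rs" zs] by simp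
  have t: "take ?n (grafts rs zs) = grafts (take ?n rs) zs"
    using split ln by (metis append_eq_conv_conj length_grafts)
  have d: "drop ?n (grafts rs zs) = grafts (drop ?n rs) (drop ?m zs)"
    using split ln by (metis append_eq_conv_conj length_grafts)
  have h1: "graft (graft c (take ?n rs)) (take ?m zs) = graft c (grafts (take ?n rs) zs)"
    using 4(1)[OF ln, of "take ?m zs"] graft_take(2)[of "take ?n rs" ?m zs] by simp
  have l2: "length (drop ?n rs) = sum_list (map nleaves cs)" using 4(3) by simp
  have h2: "grafts (grafts cs (drop ?n rs)) (drop ?m zs) = grafts cs (grafts (drop ?n rs) (drop ?m zs))"
    using 4(2)[OF l2] .
  show ?case using h1 h2 t d m by simp
qed auto

lemma graft_inj:
  "length xs = nleaves a \<Longrightarrow> length ys = nleaves a \<Longrightarrow> graft a xs = graft a ys \<Longrightarrow> xs = ys"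
  "length xs = sum_list (map nleaves cs) \<Longrightarrow> length ys = sum_list (map nleaves cs) \<Longrightarrow> grafts cs xs = grafts cs ys \<Longrightarrow> xs = ys"
proof (induction a xs and cs xs arbitrary: ys and ys rule: graft_grafts.induct)
  case (1 rs) then show ?case by (auto simp: length_Suc_conv)
next
  case (4 c cs rs)
  have "take (nleaves c) rs = take (nleaves c) ys"
    using 4(1)[of "take (nleaves c) ys"] 4(3-5) by simp
  moreover have "drop (nleaves c) rs = drop (nleaves c) ys"
    using 4(2)[of "drop (nleaves c) ys"] 4(3-5) by simp
  ultimately show ?case by (metis append_take_drop_id)
qed auto

lemma grafts_le:
  "length zs = sum_list (map nleaves xs) \<Longrightarrow> \<forall>z\<in>set zs. is_gtree A ar z
   \<Longrightarrow> list_all2 (prefix_le A ar) xs (grafts xs zs)"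
proof (induction xs arbitrary: zs)
  case (Cons x xs)
  have "prefix_le A ar x (graft x (take (nleaves x) zs))"
    unfolding prefix_le_def using Cons.prems
    by (intro exI[of _ "take (nleaves x) zs"]) (auto dest: in_set_takeD)
  moreover have "list_all2 (prefix_le A ar) xs (grafts xs (drop (nleaves x) zs))"
    using Cons.IH[of "drop (nleaves x) zs"] Cons.prems by (auto dest: in_set_dropD)
  ultimately show ?case by simp
qed simp

lemma le_grafts:
  "list_all2 (prefix_le A ar) xs ys \<Longrightarrow>
   \<exists>zs. (\<forall>z\<in>set zs. is_gtree A ar z) \<and> length zs = sum_list (map nleaves xs) \<and> ys = grafts xs zs"
proof (induction rule: list_all2_induct)
  case Nil then show ?case by simp
next
  case (Cons x xs y ys)
  obtain z1 where z1: "length z1 = nleaves x" "\<forall>r\<in>set z1. is_gtree A ar r" "y = graft x z1"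
    using Cons(1) unfolding prefix_le_def by blast
  obtain zs where zs: "\<forall>z\<in>set zs. is_gtree A ar z" "length zs = sum_list (map nleaves xs)" "ys = grafts xs zs"
    using Cons(3) by blast
  show ?case using z1 zs by (intro exI[of _ "z1 @ zs"]) auto
qed

lemma L_key:
  assumes "length xs = nleaves s" "length ys = nleaves s"
  shows "prefix_le A ar (graft s xs) (graft s ys) \<longleftrightarrow> list_all2 (prefix_le A ar) xs ys"
proof
  assume "prefix_le A ar (graft s xs) (graft s ys)"
  then obtain zs where zs: "length zs = nleaves (graft s xs)" "\<forall>z\<in>set zs. is_gtree A ar z"
    "graft s ys = graft (graft s xs) zs" unfolding prefix_le_def by blast
  have "graft s ys = graft s (grafts xs zs)" using zs(3) graft_assoc(1)[OF assms(1)] by simp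
  then have "ys = grafts xs zs" using graft_inj(1)[of ys s "grafts xs zs"] assms by simp
  then show "list_all2 (prefix_le A ar) xs ys"
    using grafts_le[of zs xs A ar] zs nleaves_graft(1)[OF assms(1)] by simp
next
  assume "list_all2 (prefix_le A ar) xs ys"
  then obtain zs where zs: "\<forall>z\<in>set zs. is_gtree A ar z" "length zs = sum_list (map nleaves xs)" "ys = grafts xs zs"
    using le_grafts by blast
  show "prefix_le A ar (graft s xs) (graft s ys)"
    unfolding prefix_le_def using zs graft_assoc(1)[OF assms(1)] nleaves_graft(1)[OF assms(1)]
    by (intro exI[of _ zs]) auto
qed

lemma Leaf_le: "is_gtree A ar x \<Longrightarrow> prefix_le A ar Leaf x"
  unfolding prefix_le_def by (intro exI[of _ "[x]"]) auto

lemma iso_rev: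
  assumes "bij_betw g B A" "\<forall>x\<in>B. \<forall>y\<in>B. leB x y \<longleftrightarrow> leA (g x) (g y)"
  shows "poset_iso A leA B leB"
  unfolding poset_iso_def
proof (intro exI[of _ "inv_into B g"] conjI ballI)
  show "bij_betw (inv_into B g) A B" using assms(1) by (rule bij_betw_inv_into)
  fix x y assume "x \<in> A" "y \<in> A"
  then have "inv_into B g x \<in> B" "inv_into B g y \<in> B" "g (inv_into B g x) = x" "g (inv_into B g y) = y"
    using assms(1) by (auto simp: bij_betw_def intro: inv_into_into f_inv_into_f)
  then show "leA x y = leB (inv_into B g x) (inv_into B g y)" using assms(2) by metis
qed

lemma gtree_mono: "is_gtree A ar z \<Longrightarrow> A \<subseteq> B \<Longrightarrow> is_gtree B ar z"
  by (induction z) auto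

lemma gtree_Some: "is_gtree G ar a \<Longrightarrow> is_gtree (Some ` G) (ext_ar ar k) (map_gtree Some a)"
  by (induction a) (auto simp: ext_ar_def)

lemma gtree_the: "is_gtree (Some ` G) (ext_ar ar k) z \<Longrightarrow>
  is_gtree G ar (map_gtree the z) \<and> map_gtree Some (map_gtree the z) = z"
proof (induction z)
  case (Node x cs)
  then obtain a where "x = Some a" "a \<in> G" by auto
  with Node show ?case by (auto simp: ext_ar_def intro: map_idI)
qed simp

lemma the_Some[simp]: "map_gtree the (map_gtree Some a) = a"
  by (simp add: gtree.map_comp gtree.map_ident o_def)

lemma L_map:
  assumes "is_gtree G ar a" "is_gtree G ar b"
  shows "prefix_le G ar a b \<longleftrightarrow> prefix_le (ext_alph G) (ext_ar ar k) (map_gtree Some a) (map_gtree Some b)"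
proof
  assume "prefix_le G ar a b"
  then obtain zs where zs: "length zs = nleaves a" "\<forall>z\<in>set zs. is_gtree G ar z" "b = graft a zs"
    unfolding prefix_le_def by blast
  show "prefix_le (ext_alph G) (ext_ar ar k) (map_gtree Some a) (map_gtree Some b)"
    unfolding prefix_le_def using zs
    by (intro exI[of _ "map (map_gtree Some) zs"])
       (auto simp: graft_map ext_alph_def intro: gtree_mono[OF gtree_Some])
next
  assume "prefix_le (ext_alph G) (ext_ar ar k) (map_gtree Some a) (map_gtree Some b)"
  then obtain zs where zs: "length zs = nleaves a" "map_gtree Some b = graft (map_gtree Some a) zs"
    unfolding prefix_le_def by auto
  have "is_gtree (Some ` G) (ext_ar ar k) (graft (map_gtree Some a) zs)"
    using zs(2) gtree_Some[OF assms(2)] by metis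
  then have g: "\<forall>z\<in>set zs. is_gtree (Some ` G) (ext_ar ar k) z"
    using graft_gtree(1)[of zs "map_gtree Some a"] zs(1) by simp
  have "b = map_gtree the (map_gtree Some b)" by simp
  also have "\<dots> = graft a (map (map_gtree the) zs)" unfolding zs(2) by (simp only: graft_map(1) the_Some)
  finally show "prefix_le G ar a b"
    unfolding prefix_le_def using zs(1) g gtree_the[of G ar k] by (intro exI[of _ "map (map_gtree the) zs"]) auto
qed

lemma L_map_list:
  assumes "\<forall>x\<in>set xs. is_gtree G ar x" "\<forall>y\<in>set ys. is_gtree G ar y"
  shows "list_all2 (prefix_le G ar) xs ys \<longleftrightarrow>
    list_all2 (prefix_le (ext_alph G) (ext_ar ar k)) (map (map_gtree Some) xs) (map (map_gtree Some) ys)"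
  using assms L_map[of G ar _ _ k] by (auto simp: list_all2_conv_all_nth)

lemma B_char:
  "xs \<in> list_product (map (prefix_interval A ar Leaf) rs) \<longleftrightarrow>
   (\<forall>x\<in>set xs. is_gtree A ar x) \<and> list_all2 (prefix_le A ar) xs rs"
  unfolding list_product_def prefix_interval_def
  by (auto simp: list_all2_conv_all_nth all_set_conv_all_nth intro: Leaf_le)

lemma grafts_rep: "length ys = k \<Longrightarrow> grafts (replicate k Leaf) ys = ys"
proof (induction k arbitrary: ys)
  case (Suc k) then show ?case by (cases ys) auto
qed simp

lemma graft_corolla: "length ys = k \<Longrightarrow> graft (corolla k) ys = Node None ys"
  by (simp add: corolla_def grafts_rep)

lemma nleaves_corolla[simp]: "nleaves (corolla k) = k"
  by (simp add: corolla_def sum_list_replicate)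

theorem proposition3p7:
  fixes G :: "'a set" and ar :: "'a \<Rightarrow> nat"
    and s t :: "'a gtree" and rs :: "'a gtree list"
  assumes "finite G"
    and "\<forall>a\<in>G. 1 \<le> ar a"
    and "is_gtree G ar s" and "is_gtree G ar t"
    and "prefix_le G ar s t"
    and "length rs = nleaves s" and "\<forall>r\<in>set rs. is_gtree G ar r"
    and "t = graft s rs"
  shows "poset_iso (prefix_interval G ar s t) (prefix_le G ar)
           (list_product (map (prefix_interval G ar Leaf) rs)) (list_all2 (prefix_le G ar))
       \<and> poset_iso (list_product (map (prefix_interval G ar Leaf) rs)) (list_all2 (prefix_le G ar))
           (prefix_interval (ext_alph G) (ext_ar ar (nleaves s)) (corolla (nleaves s)) (diamond rs))
           (prefix_le (ext_alph G) (ext_ar ar (nleaves s)))"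
proof
  let ?B = "list_product (map (prefix_interval G ar Leaf) rs)"
  let ?k = "nleaves s"
  have lenB: "length xs = ?k" if "xs \<in> ?B" for xs
    using that assms(6) by (auto simp: B_char dest: list_all2_lengthD)
  show "poset_iso (prefix_interval G ar s t) (prefix_le G ar) ?B (list_all2 (prefix_le G ar))"
  proof (rule iso_rev)
    show "\<forall>x\<in>?B. \<forall>y\<in>?B. list_all2 (prefix_le G ar) x y \<longleftrightarrow> prefix_le G ar (graft s x) (graft s y)"
      using L_key lenB by blast
    show "bij_betw (graft s) ?B (prefix_interval G ar s t)"
      unfolding bij_betw_def
    proof
      show "inj_on (graft s) ?B" using graft_inj(1) lenB by (meson inj_onI)
      show "graft s ` ?B = prefix_interval G ar s t"
      proof
        show "graft s ` ?B \<subseteq> prefix_interval G ar s t"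
        proof
          fix u assume "u \<in> graft s ` ?B"
          then obtain xs where xs: "xs \<in> ?B" "u = graft s xs" by auto
          have l: "length xs = ?k" using lenB xs(1) .
          have g: "\<forall>x\<in>set xs. is_gtree G ar x" "list_all2 (prefix_le G ar) xs rs"
            using xs(1) by (auto simp: B_char)
          show "u \<in> prefix_interval G ar s t"
            unfolding prefix_interval_def using xs(2) l g assms(3,6,8) L_key[of xs s rs G ar]
              graft_gtree(1)[OF l]
            by (auto simp: prefix_le_def)
        qed
      next
        show "prefix_interval G ar s t \<subseteq> graft s ` ?B"
        proof
          fix u assume "u \<in> prefix_interval G ar s t"
          then obtain xs where xs: "length xs = ?k" "\<forall>x\<in>set xs. is_gtree G ar x" "u = graft s xs"
            "prefix_le G ar (graft s xs) (graft s rs)"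
          proof -
            have "prefix_le G ar s u" "prefix_le G ar u t" using \<open>u \<in> prefix_interval G ar s t\<close>
              unfolding prefix_interval_def by auto
            then show ?thesis using that assms(8) unfolding prefix_le_def[of G ar s u] by blast
          qed
          then have "xs \<in> ?B" using L_key[of xs s rs G ar] assms(6) by (auto simp: B_char)
          then show "u \<in> graft s ` ?B" using xs(3) by auto
        qed
      qed
    qed
  qed
  let ?E = "ext_alph G" and ?ea = "ext_ar ar ?k"
  let ?g = "\<lambda>xs. graft (corolla ?k) (map (map_gtree Some) xs)"
  have SE: "Some ` G \<subseteq> ?E" by (auto simp: ext_alph_def)
  have cor: "is_gtree ?E ?ea (corolla ?k)"
    by (simp add: corolla_def ext_alph_def ext_ar_def)
  have dia: "diamond rs = ?g rs"
    using assms(6) by (simp add: diamond_def graft_corolla)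
  have rsE: "\<forall>r\<in>set (map (map_gtree Some) rs). is_gtree ?E ?ea r"
    using assms(7) gtree_Some[of G ar _ ?k] gtree_mono[OF _ SE] by auto
  show "poset_iso ?B (list_all2 (prefix_le G ar))
           (prefix_interval ?E ?ea (corolla ?k) (diamond rs)) (prefix_le ?E ?ea)"
    unfolding poset_iso_def
  proof (intro exI[of _ ?g] conjI)
    show "\<forall>x\<in>?B. \<forall>y\<in>?B. list_all2 (prefix_le G ar) x y \<longleftrightarrow> prefix_le ?E ?ea (?g x) (?g y)"
    proof (intro ballI)
      fix x y assume xy: "x \<in> ?B" "y \<in> ?B"
      then have "\<forall>z\<in>set x. is_gtree G ar z" "\<forall>z\<in>set y. is_gtree G ar z" by (auto simp: B_char)
      then have "list_all2 (prefix_le G ar) x y \<longleftrightarrow>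
          list_all2 (prefix_le ?E ?ea) (map (map_gtree Some) x) (map (map_gtree Some) y)"
        by (rule L_map_list)
      also have "\<dots> \<longleftrightarrow> prefix_le ?E ?ea (?g x) (?g y)"
        using L_key[of "map (map_gtree Some) x" "corolla ?k" "map (map_gtree Some) y"] lenB xy by simp
      finally show "list_all2 (prefix_le G ar) x y \<longleftrightarrow> prefix_le ?E ?ea (?g x) (?g y)" .
    qed
    show "bij_betw ?g ?B (prefix_interval ?E ?ea (corolla ?k) (diamond rs))"
      unfolding bij_betw_def
    proof
      show "inj_on ?g ?B"
      proof (rule inj_onI)
        fix x y assume xy: "x \<in> ?B" "y \<in> ?B" "?g x = ?g y"
        then have "map (map_gtree Some) x = map (map_gtree Some) y"
          using graft_inj(1)[of "map (map_gtree Some) x" "corolla ?k" "map (map_gtree Some) y"] lenB by simp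
        moreover have "inj (map_gtree Some)" by (simp add: gtree.inj_map)
        ultimately show "x = y" by (metis inj_map_eq_map)
      qed
      show "?g ` ?B = prefix_interval ?E ?ea (corolla ?k) (diamond rs)"
      proof
        show "?g ` ?B \<subseteq> prefix_interval ?E ?ea (corolla ?k) (diamond rs)"
        proof
          fix u assume "u \<in> ?g ` ?B"
          then obtain xs where xs: "xs \<in> ?B" "u = ?g xs" by auto
          have l: "length (map (map_gtree Some) xs) = nleaves (corolla ?k)" using lenB xs(1) by simp
          have g: "\<forall>x\<in>set xs. is_gtree G ar x" "list_all2 (prefix_le G ar) xs rs"
            using xs(1) by (auto simp: B_char)
          have gE: "\<forall>x\<in>set (map (map_gtree Some) xs). is_gtree ?E ?ea x"
            using g(1) gtree_Some[of G ar _ ?k] gtree_mono[OF _ SE] by auto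
          have le: "list_all2 (prefix_le ?E ?ea) (map (map_gtree Some) xs) (map (map_gtree Some) rs)"
            using L_map_list[of xs G ar rs ?k] g assms(7) by simp
          have "prefix_le ?E ?ea u (diamond rs)"
            unfolding dia xs(2) using L_key[OF l, of "map (map_gtree Some) rs" ?E ?ea] le assms(6) by simp
          moreover have "prefix_le ?E ?ea (corolla ?k) u"
            unfolding prefix_le_def xs(2) using l gE by blast
          moreover have "is_gtree ?E ?ea u"
            unfolding xs(2) using graft_gtree(1)[OF l] cor gE by simp
          ultimately show "u \<in> prefix_interval ?E ?ea (corolla ?k) (diamond rs)"
            unfolding prefix_interval_def by blast
        qed
      next
        show "prefix_interval ?E ?ea (corolla ?k) (diamond rs) \<subseteq> ?g ` ?B"
        proof
          fix u assume "u \<in> prefix_interval ?E ?ea (corolla ?k) (diamond rs)"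
          then obtain ys where ys: "length ys = ?k" "\<forall>y\<in>set ys. is_gtree ?E ?ea y"
            "u = graft (corolla ?k) ys"
            "prefix_le ?E ?ea (graft (corolla ?k) ys) (graft (corolla ?k) (map (map_gtree Some) rs))"
            unfolding prefix_interval_def prefix_le_def dia by auto
          have le: "list_all2 (prefix_le ?E ?ea) ys (map (map_gtree Some) rs)"
            using L_key[of ys "corolla ?k" "map (map_gtree Some) rs" ?E ?ea] ys(1,4) assms(6) by simp
          have yS: "is_gtree (Some ` G) ?ea y" if "y \<in> set ys" for y
          proof -
            obtain i where i: "i < length ys" "y = ys ! i" using \<open>y \<in> set ys\<close> by (auto simp: in_set_conv_nth)
            then have "prefix_le ?E ?ea y (map_gtree Some (rs ! i))"
              using le assms(6) ys(1) by (auto simp: list_all2_conv_all_nth)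
            then obtain zs where zs: "length zs = nleaves y" "map_gtree Some (rs ! i) = graft y zs"
              unfolding prefix_le_def by auto
            have "is_gtree (Some ` G) ?ea (map_gtree Some (rs ! i))"
              using gtree_Some assms(6,7) i ys(1) by (metis nth_mem)
            then show ?thesis using zs graft_gtree(1)[OF zs(1)] by simp
          qed
          define xs where "xs = map (map_gtree the) ys"
          have mx: "map (map_gtree Some) xs = ys"
            unfolding xs_def using yS gtree_the[of G ar ?k] by (simp add: map_idI)
          have gx: "\<forall>x\<in>set xs. is_gtree G ar x"
            unfolding xs_def using yS gtree_the[of G ar ?k] by auto
          have "list_all2 (prefix_le G ar) xs rs"
            using L_map_list[of xs G ar rs ?k] gx assms(7) le mx by simp
          then have "xs \<in> ?B" using gx by (simp add: B_char)
          moreover have "u = ?g xs" using mx ys(3) by simp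
          ultimately show "u \<in> ?g ` ?B" by blast
        qed
      qed
    qed
  qed
qed

end
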